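(* Consider two CDNs with performance parameters $0\le\beta_1<\beta_2<1$ and prices $w_1,w_2\ge0$ such that each CDN attracts a set of content providers of positive measure (model in the context). Then there exist $\theta_1,\theta_2$ such that for a content provider with sensitivity $\theta\in[0,1]$: if $0\le\theta\le\theta_2$ then $0\ge U(\theta,2)$ and $0\ge U(\theta,1)$ (choosing no CDN is best); if $\theta_2\le\theta\le\theta_1$ then $U(\theta,2)\ge U(\theta,1)$ and $U(\theta,2)\ge0$ (choosing $CDN_2$ is best); if $\theta_1\le\theta\le1$ then $U(\theta,1)\ge U(\theta,2)$ and $U(\theta,1)\ge0$ (choosing $CDN_1$ is best).
   Context: Each $CDN_k$ ($k=1,2$) has a fixed performance parameter $\beta_k\in[0,1)$ and price $w_k\ge0$. There is a continuum of content providers of total mass $\Lambda>0$ with sensitivity parameters $\theta$ uniformly distributed on $[0,1]$. A content provider with sensitivity $\theta$ hiring $CDN_k$ gets payoff $U(\theta,k)=\theta(1-\beta_k)-w_k$; hiring none gives $0$. Each content provider hires at most one CDN, choosing an option of maximum payoff. *)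

theory Defs
  imports "HOL-Analysis.Analysis"
begin

definition U :: "(nat \<Rightarrow> real) \<Rightarrow> (nat \<Rightarrow> real) \<Rightarrow> real \<Rightarrow> nat \<Rightarrow> real" where
  "U beta w theta k = theta * (1 - beta k) - w k"

definition attracted :: "(nat \<Rightarrow> real) \<Rightarrow> (nat \<Rightarrow> real) \<Rightarrow> nat \<Rightarrow> nat \<Rightarrow> real set" where
  "attracted beta w k j =
     {theta \<in> {0..1}. U beta w theta k \<ge> 0 \<and> U beta w theta k \<ge> U beta w theta j}"

end

theory Submission
  imports Defs
begin

theorem lemma2:
  fixes beta w :: "nat \<Rightarrow> real" and Lambda :: real
  assumes "Lambda > 0"
    and "0 \<le> beta 1" and "beta 1 < beta 2" and "beta 2 < 1"
    and "w 1 \<ge> 0" and "w 2 \<ge> 0"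
    and "emeasure lborel (attracted beta w 1 2) > 0"
    and "emeasure lborel (attracted beta w 2 1) > 0"
  shows "\<exists>theta1 theta2. 0 \<le> theta2 \<and> theta2 \<le> theta1 \<and> theta1 \<le> 1 \<and>
    (\<forall>theta \<in> {0..1}.
      (theta \<le> theta2 \<longrightarrow> 0 \<ge> U beta w theta 2 \<and> 0 \<ge> U beta w theta 1) \<and>
      (theta2 \<le> theta \<and> theta \<le> theta1 \<longrightarrow>
         U beta w theta 2 \<ge> U beta w theta 1 \<and> U beta w theta 2 \<ge> 0) \<and>
      (theta1 \<le> theta \<longrightarrow>
         U beta w theta 1 \<ge> U beta w theta 2 \<and> U beta w theta 1 \<ge> 0))"
  proof -
  define a1 where "a1 = 1 - beta 1"
  define a2 where "a2 = 1 - beta 2"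
  have a: "a1 > a2" "a2 > 0" using assms unfolding a1_def a2_def by auto
  define t1 where "t1 = (w 1 - w 2) / (a1 - a2)"
  define t2 where "t2 = w 2 / a2"
  have U1: "U beta w th 1 = th * a1 - w 1" for th unfolding U_def a1_def by simp
  have U2: "U beta w th 2 = th * a2 - w 2" for th unfolding U_def a2_def by simp
  have c12: "(U beta w th 1 \<ge> U beta w th 2) \<longleftrightarrow> th \<ge> t1" for th
    unfolding U1 U2 t1_def using a by (simp add: field_simps)
  have c21: "(U beta w th 2 \<ge> U beta w th 1) \<longleftrightarrow> th \<le> t1" for th
    unfolding U1 U2 t1_def using a by (simp add: field_simps)
  have p2: "(U beta w th 2 \<ge> 0) \<longleftrightarrow> th \<ge> t2" for th
    unfolding U2 t2_def using a by (simp add: field_simps)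
  have t2nn: "t2 \<ge> 0" unfolding t2_def using a assms by simp
  have le21: "t2 \<le> t1"
  proof (rule ccontr)
    assume "\<not> t2 \<le> t1"
    hence "attracted beta w 2 1 = {}" unfolding attracted_def using c21 p2 by force
    thus False using assms(8) by simp
  qed
  have le1: "t1 \<le> 1"
  proof (rule ccontr)
    assume "\<not> t1 \<le> 1"
    hence "attracted beta w 1 2 = {}" unfolding attracted_def using c12 by force
    thus False using assms(7) by simp
  qed
  show ?thesis
  proof (rule exI[of _ t1], rule exI[of _ t2], intro conjI ballI impI)
    fix th :: real assume "th \<in> {0..1}" "th \<le> t2"
    have "U beta w th 2 \<le> 0" using \<open>th \<le> t2\<close> a unfolding U2 t2_def
        by (simp add: field_simps)
    thus "0 \<ge> U beta w th 2" by simp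
    show "0 \<ge> U beta w th 1"
    proof -
      have "th \<le> t1" using \<open>th \<le> t2\<close> le21 by simp
      hence "U beta w th 1 \<le> U beta w th 2" using c21 by blast
      moreover have "U beta w th 2 \<le> 0" using \<open>th \<le> t2\<close> a unfolding U2 t2_def
        by (simp add: field_simps)
      ultimately show ?thesis by simp
    qed
  next
    fix th :: real assume "th \<in> {0..1}" "t2 \<le> th \<and> th \<le> t1"
    thus "U beta w th 2 \<ge> U beta w th 1" "U beta w th 2 \<ge> 0" using c21 p2 by auto
  next
    fix th :: real assume "th \<in> {0..1}" "t1 \<le> th"
    thus "U beta w th 1 \<ge> U beta w th 2" using c12 by auto
    have "U beta w th 2 \<ge> 0" using p2 le21 \<open>t1 \<le> th\<close> by auto
    moreover have "U beta w th 1 \<ge> U beta w th 2" using c12 \<open>t1 \<le> th\<close> by blast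
    ultimately show "U beta w th 1 \<ge> 0" by linarith
  qed (use t2nn le21 le1 in auto)
qed

end
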